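(* Let $A,B:\mathbb{R}^n\rightrightarrows\mathbb{R}^n$ be maximally monotone with $B$ $\beta$-cocoercive for some $\beta>0$, and suppose the solution set $X^\star=\{x:0\in Ax+Bx\}$ is nonempty. Suppose the problem $0\in Ax+Bx$ satisfies restricted strong monotonicity with modulus $\mu_f>0$. Let $\lambda\in(0,2)$, $0<\gamma\le\beta$, assume the DR operator $T$ has a fixed point, and let $w^1\in\mathbb{R}^n$. Then $T$ satisfies the error bound condition on $W=\{w:\operatorname{dist}_{W^\star}(w)\le\operatorname{dist}_{W^\star}(w^1)\}$ with constant $$\mu=\frac{\gamma+\gamma\min(\mu_f\beta,1)+\beta}{\lambda\gamma\min(\mu_f\beta,1)}.$$
   Context: For a maximally monotone operator $M$, $J_M=(I+M)^{-1}$ and $R_M=2J_M-I$. The DR operator is $T=(1-\tfrac{\lambda}{2})I+\tfrac{\lambda}{2}R_{\gamma A}R_{\gamma B}$ and $W^\star$ denotes its set of fixed points; $\operatorname{dist}_{W^\star}$ is the Euclidean distance to $W^\star$. $B$ is $\beta$-cocoercive if $\langle u-v,x-y\rangle\ge\beta\|u-v\|^2$ for all $(x,u),(y,v)$ in the graph of $B$. Restricted strong monotonicity with modulus $\mu_f>0$: for all $x\in\mathbb{R}^n$, all $u\in Ax$, $v\in Bx$, $\langle u+v,x-x^\star\rangle\ge\mu_f\|x-x^\star\|^2$ where $x^\star=\Pi_{X^\star}(x)$ is the Euclidean projection of $x$ onto $X^\star$. Error bound condition: $T$ satisfies it on $W$ with constant $\mu\ge0$ if $\operatorname{dist}_{W^\star}(w)\le\mu\|(I-T)w\|$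 for all $w\in W$. *)

theory Defs
  imports "HOL-Analysis.Analysis"
begin

definition monotone_op :: "('a::euclidean_space \<Rightarrow> 'a set) \<Rightarrow> bool" where
  "monotone_op M \<longleftrightarrow> (\<forall>x y u v. u \<in> M x \<longrightarrow> v \<in> M y \<longrightarrow> inner (u - v) (x - y) \<ge> 0)"

definition max_monotone_op :: "('a::euclidean_space \<Rightarrow> 'a set) \<Rightarrow> bool" where
  "max_monotone_op M \<longleftrightarrow> monotone_op M \<and>
     (\<forall>x u. (\<forall>y v. v \<in> M y \<longrightarrow> inner (u - v) (x - y) \<ge> 0) \<longrightarrow> u \<in> M x)"

definition cocoercive_op :: "real \<Rightarrow> ('a::euclidean_space \<Rightarrow> 'a set) \<Rightarrow> bool" where
  "cocoercive_op \<beta> M \<longleftrightarrow>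
     (\<forall>x y u v. u \<in> M x \<longrightarrow> v \<in> M y \<longrightarrow> inner (u - v) (x - y) \<ge> \<beta> * (norm (u - v))\<^sup>2)"

definition scale_op :: "real \<Rightarrow> ('a::euclidean_space \<Rightarrow> 'a set) \<Rightarrow> ('a \<Rightarrow> 'a set)" where
  "scale_op \<gamma> M = (\<lambda>x. (\<lambda>u. \<gamma> *\<^sub>R u) ` M x)"

text \<open>Resolvent \<open>J_M = (I + M)^{-1}\<close>: \<open>J_M x\<close> is the (unique, for maximally monotone M)
  point y with \<open>x \<in> y + M y\<close>.\<close>
definition resolvent :: "('a::euclidean_space \<Rightarrow> 'a set) \<Rightarrow> 'a \<Rightarrow> 'a" where
  "resolvent M x = (THE y. x - y \<in> M y)"

definition reflected_resolvent :: "('a::euclidean_space \<Rightarrow> 'a set) \<Rightarrow> 'a \<Rightarrow> 'a" where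
  "reflected_resolvent M x = 2 *\<^sub>R resolvent M x - x"

definition DR_op :: "real \<Rightarrow> real \<Rightarrow> ('a::euclidean_space \<Rightarrow> 'a set) \<Rightarrow> ('a \<Rightarrow> 'a set) \<Rightarrow> 'a \<Rightarrow> 'a" where
  "DR_op lam \<gamma> A B w =
     (1 - lam / 2) *\<^sub>R w + (lam / 2) *\<^sub>R
        reflected_resolvent (scale_op \<gamma> A) (reflected_resolvent (scale_op \<gamma> B) w)"

definition fixed_points :: "('a \<Rightarrow> 'a) \<Rightarrow> 'a set" where
  "fixed_points T = {w. T w = w}"

definition solution_set :: "('a::euclidean_space \<Rightarrow> 'a set) \<Rightarrow> ('a \<Rightarrow> 'a set) \<Rightarrow> 'a set" where
  "solution_set A B = {x. \<exists>u \<in> A x. \<exists>v \<in> B x. u + v = 0}"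

definition restricted_strongly_monotone ::
  "real \<Rightarrow> ('a::euclidean_space \<Rightarrow> 'a set) \<Rightarrow> ('a \<Rightarrow> 'a set) \<Rightarrow> bool" where
  "restricted_strongly_monotone \<mu>f A B \<longleftrightarrow>
     (\<forall>x u v. u \<in> A x \<longrightarrow> v \<in> B x \<longrightarrow>
        inner (u + v) (x - closest_point (solution_set A B) x)
          \<ge> \<mu>f * (norm (x - closest_point (solution_set A B) x))\<^sup>2)"

definition error_bound_on :: "('a::euclidean_space \<Rightarrow> 'a) \<Rightarrow> 'a set \<Rightarrow> real \<Rightarrow> bool" where
  "error_bound_on T W \<mu> \<longleftrightarrow> \<mu> \<ge> 0 \<and>
     (\<forall>w \<in> W. infdist w (fixed_points T) \<le> \<mu> * norm (w - T w))"

end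

theory Submission
  imports Defs
begin
lemma finite_step:
  fixes F :: "('a::euclidean_space \<times> 'a) set"
  assumes fin: "finite F" and ne: "F \<noteq> {}"
    and mono: "\<And>y v y' v'. (y,v) \<in> F \<Longrightarrow> (y',v') \<in> F \<Longrightarrow> 0 \<le> inner (v - v') (y - y')"
    and gam: "\<gamma> > 0"
  shows "\<exists>x. \<forall>p\<in>F. 0 \<le> inner (w - x - \<gamma> *\<^sub>R snd p) (x - fst p)"
proof (rule ccontr)
  assume "\<not> ?thesis"
  then have neg: "\<And>x. \<exists>p\<in>F. inner (w - x - \<gamma> *\<^sub>R snd p) (x - fst p) < 0"
    by (auto simp: not_le)
  define \<phi> where "\<phi> p x = inner (w - x - \<gamma> *\<^sub>R snd p) (x - fst p)" for p x
  define \<psi> where "\<psi> p x = max 0 (- \<phi> p x)" for p x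
  define S where "S x = (\<Sum>p\<in>F. \<psi> p x)" for x
  have psi_nn: "0 \<le> \<psi> p x" for p x unfolding \<psi>_def by simp
  have Spos: "S x > 0" for x
  proof -
    obtain p where p: "p \<in> F" "\<phi> p x < 0" using neg[of x] unfolding \<phi>_def by blast
    have "\<psi> p x > 0" using p unfolding \<psi>_def by simp
    then show ?thesis unfolding S_def using fin p psi_nn by (intro sum_pos2[of F p]) auto
  qed
  define f where "f x = (1 / S x) *\<^sub>R (\<Sum>p\<in>F. \<psi> p x *\<^sub>R fst p)" for x
  define K where "K = convex hull (fst ` F)"
  have Kc: "compact K" unfolding K_def using fin by (simp add: compact_convex_hull finite_imp_compact)
  have Kv: "convex K" unfolding K_def by simp
  have Kne: "K \<noteq> {}" unfolding K_def using ne by simp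
  have cont: "continuous_on K f"
  proof -
    have c1: "continuous_on UNIV (\<phi> p)" for p unfolding \<phi>_def by (intro continuous_intros)
    have c2: "continuous_on UNIV (\<psi> p)" for p unfolding \<psi>_def
      using c1[of p] by (intro continuous_intros) auto
    have c3: "continuous_on UNIV S" unfolding S_def using c2 by (intro continuous_intros) auto
    have "continuous_on UNIV f" unfolding f_def
      using c2 c3 Spos by (intro continuous_intros) (auto simp: less_imp_neq[symmetric] dest: less_imp_neq)
    then show ?thesis by (rule continuous_on_subset) simp
  qed
  have fim: "f \<in> K \<rightarrow> K"
  proof
    fix x assume "x \<in> K"
    have "f x = (\<Sum>p\<in>F. (\<psi> p x / S x) *\<^sub>R fst p)"
      unfolding f_def by (simp add: scaleR_sum_right)
    also have "\<dots> \<in> K"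
    proof (rule convex_sum[OF fin Kv])
      show "(\<Sum>p\<in>F. \<psi> p x / S x) = 1"
        using Spos[of x] by (simp add: sum_divide_distrib[symmetric] S_def)
      show "\<And>p. p \<in> F \<Longrightarrow> 0 \<le> \<psi> p x / S x" using Spos[of x] psi_nn by simp
      show "\<And>p. p \<in> F \<Longrightarrow> fst p \<in> K" unfolding K_def by (simp add: hull_inc)
    qed
    finally show "f x \<in> K" .
  qed
  obtain x where "x \<in> K" and fx: "f x = x" using brouwer[OF Kc Kv Kne cont fim] by blast
  define l where "l p = \<psi> p x" for p
  have Sx: "S x *\<^sub>R x = (\<Sum>p\<in>F. l p *\<^sub>R fst p)"
  proof -
    have "S x *\<^sub>R x = S x *\<^sub>R f x" using fx by simp
    also have "\<dots> = (\<Sum>p\<in>F. l p *\<^sub>R fst p)" unfolding f_def l_def using Spos[of x] by simp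
    finally show ?thesis .
  qed
  have SxF: "S x = (\<Sum>q\<in>F. l q)" unfolding S_def l_def by simp
  define Q where "Q p q = l p * l q * inner (w - x - \<gamma> *\<^sub>R snd p) (fst q - fst p)" for p q
  have key1: "l p * (S x * \<phi> p x) = (\<Sum>q\<in>F. Q p q)" for p
  proof -
    have "S x * \<phi> p x = inner (w - x - \<gamma> *\<^sub>R snd p) (S x *\<^sub>R x - S x *\<^sub>R fst p)"
      unfolding \<phi>_def by (simp add: inner_diff_right algebra_simps)
    also have "S x *\<^sub>R x - S x *\<^sub>R fst p = (\<Sum>q\<in>F. l q *\<^sub>R fst q) - (\<Sum>q\<in>F. l q) *\<^sub>R fst p"
      using Sx SxF by simp
    also have "\<dots> = (\<Sum>q\<in>F. l q *\<^sub>R (fst q - fst p))"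
      by (simp add: scaleR_sum_left scaleR_diff_right sum_subtractf)
    also have "inner (w - x - \<gamma> *\<^sub>R snd p) \<dots> = (\<Sum>q\<in>F. l q * inner (w - x - \<gamma> *\<^sub>R snd p) (fst q - fst p))"
      by (simp add: inner_sum_right)
    finally have k0: "S x * \<phi> p x = (\<Sum>q\<in>F. l q * inner (w - x - \<gamma> *\<^sub>R snd p) (fst q - fst p))" .
    show ?thesis unfolding k0 Q_def by (simp add: sum_distrib_left algebra_simps)
  qed
  have Qsym: "Q p q + Q q p = \<gamma> * (l p * l q) * inner (snd p - snd q) (fst p - fst q)" for p q
    unfolding Q_def by (simp add: inner_diff_left inner_diff_right algebra_simps inner_commute)
  have Qnn: "0 \<le> Q p q + Q q p" if "p \<in> F" "q \<in> F" for p q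
    unfolding Qsym using mono[of "fst p" "snd p" "fst q" "snd q"] that gam
    by (simp add: l_def psi_nn)
  have "(\<Sum>p\<in>F. \<Sum>q\<in>F. Q p q) = (\<Sum>p\<in>F. \<Sum>q\<in>F. Q q p)" by (rule sum.swap)
  then have "2 * (\<Sum>p\<in>F. \<Sum>q\<in>F. Q p q) = (\<Sum>p\<in>F. \<Sum>q\<in>F. Q p q + Q q p)"
    by (simp add: sum.distrib)
  also have "\<dots> \<ge> 0" using Qnn by (intro sum_nonneg) auto
  finally have "0 \<le> (\<Sum>p\<in>F. l p * (S x * \<phi> p x))" unfolding key1 by simp
  then have ge: "0 \<le> S x * (\<Sum>p\<in>F. l p * \<phi> p x)"
    by (simp add: sum_distrib_left algebra_simps)
  have lt: "(\<Sum>p\<in>F. l p * \<phi> p x) < 0"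
  proof -
    obtain p0 where p0: "p0 \<in> F" "\<phi> p0 x < 0" using neg[of x] unfolding \<phi>_def by blast
    have "0 < (\<Sum>p\<in>F. - (l p * \<phi> p x))"
    proof (rule sum_pos2[OF fin p0(1)])
      show "0 < - (l p0 * \<phi> p0 x)" using p0 unfolding l_def \<psi>_def by (simp add: mult_less_0_iff mult_neg_neg)
      show "\<And>p. p \<in> F \<Longrightarrow> 0 \<le> - (l p * \<phi> p x)"
        unfolding l_def \<psi>_def by (auto simp: max_def mult_le_0_iff)
    qed
    then show ?thesis by (simp add: sum_negf)
  qed
  show False using ge lt Spos[of x] by (simp add: mult_less_0_iff zero_le_mult_iff)
qed

lemma mono_opD: "monotone_op M \<Longrightarrow> u \<in> M x \<Longrightarrow> v \<in> M y \<Longrightarrow> 0 \<le> inner (u - v) (x - y)"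
  unfolding monotone_op_def by blast

lemma max_opD: "max_monotone_op M \<Longrightarrow> (\<And>y v. v \<in> M y \<Longrightarrow> 0 \<le> inner (u - v) (x - y)) \<Longrightarrow> u \<in> M x"
  unfolding max_monotone_op_def by blast

lemma bounded_quad:
  fixes x :: "'a::real_inner"
  assumes "(norm x)^2 \<le> a * norm x + b" "0 \<le> a" "0 \<le> b"
  shows "norm x \<le> a + b + 1"
proof (cases "norm x \<le> 1")
  case True then show ?thesis using assms by linarith
next
  case False
  then have "b \<le> b * norm x" using assms by (simp add: mult_le_cancel_left1)
  then have "norm x * norm x \<le> (a + b) * norm x" using assms by (simp add: power2_eq_square algebra_simps)
  moreover have "0 < norm x" using False by linarith
  ultimately have "norm x \<le> a + b" using mult_le_cancel_right_pos by blast
  then show ?thesis by linarith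
qed

lemma minty:
  fixes M :: "'a::euclidean_space \<Rightarrow> 'a set"
  assumes mm: "max_monotone_op M" and gam: "\<gamma> > 0"
  shows "\<exists>x. (w - x) /\<^sub>R \<gamma> \<in> M x"
proof -
  have mono: "monotone_op M" using mm unfolding max_monotone_op_def by blast
  define G where "G = {(y,v). v \<in> M y}"
  obtain p0 where p0: "p0 \<in> G"
  proof (cases "G = {}")
    case True
    then have "0 \<in> M 0" by (intro max_opD[OF mm]) (auto simp: G_def)
    then show ?thesis using that unfolding G_def by blast
  next
    case False then show ?thesis using that by blast
  qed
  define C where "C p = {x. 0 \<le> inner (w - x - \<gamma> *\<^sub>R snd p) (x - fst p)}" for p
  have closedC: "closed (C p)" for p
    unfolding C_def by (intro closed_Collect_le continuous_intros)
  have boundedC: "bounded (C p)" for p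
  proof -
    define c where "c = w - \<gamma> *\<^sub>R snd p"
    define y where "y = fst p"
    have "norm x \<le> norm (c + y) + norm c * norm y + 1" if "x \<in> C p" for x
    proof (rule bounded_quad)
      have eq: "c - x = w - x - \<gamma> *\<^sub>R snd p" unfolding c_def by (simp add: algebra_simps)
      have "0 \<le> inner (c - x) (x - y)" unfolding eq using that unfolding C_def y_def by simp
      then have "(norm x)^2 \<le> inner (c + y) x - inner c y"
        by (simp add: inner_diff_left inner_diff_right inner_add_left inner_add_right power2_norm_eq_inner inner_commute)
      also have "\<dots> \<le> norm (c + y) * norm x + norm c * norm y"
        using Cauchy_Schwarz_ineq2[of "c+y" x] Cauchy_Schwarz_ineq2[of c y]
        by (smt (verit) abs_le_iff)
      finally show "(norm x)^2 \<le> norm (c + y) * norm x + norm c * norm y" .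
    qed auto
    then show ?thesis unfolding bounded_iff by blast
  qed
  have compactC: "compact (C p0)" using closedC boundedC by (simp add: compact_eq_bounded_closed)
  have "C p0 \<inter> (\<Inter>p\<in>G. C p) \<noteq> {}"
  proof (rule compact_imp_fip_image[OF compactC closedC])
    fix I' assume I': "finite I'" "I' \<subseteq> G"
    have "\<exists>x. \<forall>p\<in>insert p0 I'. 0 \<le> inner (w - x - \<gamma> *\<^sub>R snd p) (x - fst p)"
    proof (rule finite_step)
      show "finite (insert p0 I')" using I' by simp
      show "0 \<le> inner (v - v') (y - y')" if "(y,v) \<in> insert p0 I'" "(y',v') \<in> insert p0 I'" for y v y' v'
        using that I' p0 mono_opD[OF mono] unfolding G_def by blast
    qed (use gam in auto)
    then show "C p0 \<inter> (\<Inter>p\<in>I'. C p) \<noteq> {}" unfolding C_def by blast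
  qed
  then obtain x where x: "\<And>p. p \<in> G \<Longrightarrow> x \<in> C p" by blast
  have "(w - x) /\<^sub>R \<gamma> \<in> M x"
  proof (rule max_opD[OF mm])
    fix y v assume "v \<in> M y"
    then have "0 \<le> inner (w - x - \<gamma> *\<^sub>R v) (x - y)" using x[of "(y,v)"] unfolding G_def C_def by simp
    moreover have "(w - x) /\<^sub>R \<gamma> - v = inverse \<gamma> *\<^sub>R (w - x - \<gamma> *\<^sub>R v)" using gam
      by (simp add: algebra_simps)
    ultimately show "0 \<le> inner ((w - x) /\<^sub>R \<gamma> - v) (x - y)" using gam by simp
  qed
  then show ?thesis by blast
qed

lemma scale_op_mem: "\<gamma> \<noteq> 0 \<Longrightarrow> u \<in> scale_op \<gamma> M x \<longleftrightarrow> u /\<^sub>R \<gamma> \<in> M x"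
  unfolding scale_op_def by (auto simp: image_iff intro!: bexI[of _ "u /\<^sub>R \<gamma>"])

lemma resolvent_eq:
  assumes mm: "max_monotone_op M" and gam: "\<gamma> > 0" and x: "(w - x) /\<^sub>R \<gamma> \<in> M x"
  shows "resolvent (scale_op \<gamma> M) w = x"
  unfolding resolvent_def
proof (rule the_equality)
  show "w - x \<in> scale_op \<gamma> M x" using x gam by (simp add: scale_op_mem)
  fix y assume "w - y \<in> scale_op \<gamma> M y"
  then have y: "(w - y) /\<^sub>R \<gamma> \<in> M y" using gam by (simp add: scale_op_mem)
  have mono: "monotone_op M" using mm unfolding max_monotone_op_def by blast
  have "0 \<le> inner ((w - x) /\<^sub>R \<gamma> - (w - y) /\<^sub>R \<gamma>) (x - y)" by (rule mono_opD[OF mono x y])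
  also have "(w - x) /\<^sub>R \<gamma> - (w - y) /\<^sub>R \<gamma> = (y - x) /\<^sub>R \<gamma>"
    by (simp add: algebra_simps)
  finally have "0 \<le> inverse \<gamma> * inner (y - x) (x - y)" by simp
  then have "0 \<le> inner (y - x) (x - y)" using gam by (simp add: zero_le_mult_iff)
  moreover have "y - x = - (x - y)" by simp
  ultimately have "inner (x - y) (x - y) \<le> 0" by (metis inner_minus_left neg_0_le_iff_le)
  then show "y = x" by (metis inner_eq_zero_iff order_antisym inner_ge_zero right_minus_eq)
qed

lemma resolvent_mem:
  assumes mm: "max_monotone_op M" and gam: "\<gamma> > 0"
  shows "(w - resolvent (scale_op \<gamma> M) w) /\<^sub>R \<gamma> \<in> M (resolvent (scale_op \<gamma> M) w)"
proof -
  obtain x where x: "(w - x) /\<^sub>R \<gamma> \<in> M x" using minty[OF mm gam] by blast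
  then show ?thesis using resolvent_eq[OF mm gam x] by simp
qed

lemma cocoercive_dom:
  assumes mm: "max_monotone_op B" and beta: "\<beta> > 0" and co: "cocoercive_op \<beta> B"
  shows "\<exists>v. v \<in> B x0"
proof -
  define Cop where "Cop v = {s. v \<in> B (s + \<beta> *\<^sub>R v)}" for v
  have coD: "\<beta> * (norm (u - v))^2 \<le> inner (u - v) (x - y)" if "u \<in> B x" "v \<in> B y" for u v x y
    using co that unfolding cocoercive_op_def by blast
  have monoC: "monotone_op Cop" unfolding monotone_op_def
  proof (intro allI impI)
    fix v v' s s' assume "s \<in> Cop v" "s' \<in> Cop v'"
    then have "\<beta> * (norm (v - v'))^2 \<le> inner (v - v') ((s + \<beta> *\<^sub>R v) - (s' + \<beta> *\<^sub>R v'))"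
      unfolding Cop_def by (intro coD) auto
    then show "0 \<le> inner (s - s') (v - v')"
      by (simp add: inner_add_right inner_diff_right inner_diff_left power2_norm_eq_inner inner_commute algebra_simps)
  qed
  have mmC: "max_monotone_op Cop" unfolding max_monotone_op_def
  proof (intro conjI monoC allI impI)
    fix v s assume H: "\<forall>v' s'. s' \<in> Cop v' \<longrightarrow> 0 \<le> inner (s - s') (v - v')"
    have "v \<in> B (s + \<beta> *\<^sub>R v)"
    proof (rule max_opD[OF mm])
      fix y u assume u: "u \<in> B y"
      have "y - \<beta> *\<^sub>R u \<in> Cop u" unfolding Cop_def using u by simp
      then have "0 \<le> inner (s - (y - \<beta> *\<^sub>R u)) (v - u)" using H by blast
      moreover have "inner (v - u) (s + \<beta> *\<^sub>R v - y) = inner (s - (y - \<beta> *\<^sub>R u)) (v - u) + \<beta> * inner (v - u) (v - u)"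
        by (simp add: inner_add_right inner_diff_right inner_diff_left inner_add_left inner_commute algebra_simps)
      ultimately show "0 \<le> inner (v - u) (s + \<beta> *\<^sub>R v - y)" using beta by simp
    qed
    then show "s \<in> Cop v" unfolding Cop_def by simp
  qed
  obtain v where v: "(x0 /\<^sub>R \<beta> - v) /\<^sub>R (1/\<beta>) \<in> Cop v" using minty[OF mmC, of "1/\<beta>"] beta by auto
  have "(x0 /\<^sub>R \<beta> - v) /\<^sub>R (1/\<beta>) + \<beta> *\<^sub>R v = x0" using beta by (simp add: algebra_simps)
  then have "v \<in> B x0" using v unfolding Cop_def by simp
  then show ?thesis by blast
qed

lemma core_ineq:
  fixes d e G H :: "'a::real_inner"
  assumes t: "0 < t" "t \<le> 1" and nu: "0 < \<nu>" "\<nu> \<le> t"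
    and c2: "inner G e \<ge> (norm G)^2" and c3: "inner H d \<ge> (norm H)^2"
    and c5: "\<nu> * (norm e)^2 \<le> inner d e - t * inner H e"
  shows "\<nu> * norm (e + t *\<^sub>R G + t *\<^sub>R H) \<le> (1+t) * norm d"
proof -
  define \<rho> where "\<rho> = 1 + t"
  define P where "P = \<rho>^2*(2-t) - 2*\<rho>*\<nu>*(1-t) - 2*\<nu>^2*t"
  define X where "X = \<rho> *\<^sub>R d - (\<rho>*\<nu>) *\<^sub>R e - (t*(\<rho>-\<nu>)) *\<^sub>R H"
  define Y where "Y = (1+\<rho>) *\<^sub>R (e - G) + t *\<^sub>R H"
  define r where "r = e + t *\<^sub>R G + t *\<^sub>R H"
  have h1: "\<rho>^2*(1-t) \<ge> (2*\<nu>)*\<rho>*(1-t)"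
  proof -
    have "2*\<nu> \<le> \<rho>" using nu t unfolding \<rho>_def by linarith
    then have "(2*\<nu>)*\<rho> \<le> \<rho>*\<rho>" using t unfolding \<rho>_def by (intro mult_right_mono) auto
    then show ?thesis using t by (simp add: power2_eq_square mult_right_mono)
  qed
  have h2: "\<nu>^2*t \<le> t" 
  proof -
    have "\<nu>^2 \<le> 1" using nu t by (simp add: power_le_one)
    then show ?thesis using t by (simp add: mult_left_le_one_le mult.commute)
  qed
  have h3: "\<nu>^2*t^2 \<le> 1"
    using nu t by (simp add: power_le_one mult_le_one power_mult_distrib[symmetric])
  have "P \<ge> \<rho>^2 - 2*t" using h1 h2 unfolding P_def by (simp add: algebra_simps power2_eq_square)
  moreover have "\<rho>^2 - 2*t \<ge> 1" unfolding \<rho>_def by (simp add: power2_eq_square algebra_simps)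
  ultimately have "P \<ge> 1" by linarith
  moreover have "(1+\<rho>)*P \<ge> 1*P"
    using \<open>P \<ge> 1\<close> t unfolding \<rho>_def by (intro mult_right_mono) auto
  ultimately have Ppos: "(1+\<rho>)*P - \<nu>^2*t^2 \<ge> 0" using h3 by linarith
  have id: "(1+\<rho>)*(\<rho>^2*(norm d)^2 - \<nu>^2*(norm r)^2 - 2*\<rho>*\<nu>^2*t*(inner G e - (norm G)^2)
     - 2*\<rho>*t*(\<rho>-\<nu>)*(inner H d - (norm H)^2) - 2*\<nu>*\<rho>^2*(inner d e - t*inner H e - \<nu>*(norm e)^2))
     = (1+\<rho>)*(norm X)^2 + \<nu>^2*t*(norm Y)^2 + t*((1+\<rho>)*P - \<nu>^2*t^2)*(norm H)^2"
    unfolding X_def Y_def r_def P_def \<rho>_def power2_norm_eq_inner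
    by (simp add: inner_add_left inner_add_right inner_diff_left inner_diff_right inner_commute
        algebra_simps power2_eq_square)
  have rhs: "(1+\<rho>)*(norm X)^2 + \<nu>^2*t*(norm Y)^2 + t*((1+\<rho>)*P - \<nu>^2*t^2)*(norm H)^2 \<ge> 0"
    using Ppos t unfolding \<rho>_def by (intro add_nonneg_nonneg mult_nonneg_nonneg) auto
  have "0 \<le> \<rho>^2*(norm d)^2 - \<nu>^2*(norm r)^2 - 2*\<rho>*\<nu>^2*t*(inner G e - (norm G)^2)
     - 2*\<rho>*t*(\<rho>-\<nu>)*(inner H d - (norm H)^2) - 2*\<nu>*\<rho>^2*(inner d e - t*inner H e - \<nu>*(norm e)^2)"
    using id rhs t unfolding \<rho>_def by (smt (verit) zero_le_mult_iff)
  moreover have "0 \<le> 2*\<rho>*\<nu>^2*t*(inner G e - (norm G)^2)" using c2 t nu unfolding \<rho>_def by simp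
  moreover have "0 \<le> 2*\<rho>*t*(\<rho>-\<nu>)*(inner H d - (norm H)^2)" using c3 t nu unfolding \<rho>_def by simp
  moreover have "0 \<le> 2*\<nu>*\<rho>^2*(inner d e - t*inner H e - \<nu>*(norm e)^2)" using c5 t nu unfolding \<rho>_def by simp
  ultimately have "\<nu>^2 * (norm r)^2 \<le> \<rho>^2 * (norm d)^2" by linarith
  then have "(\<nu> * norm r)^2 \<le> (\<rho> * norm d)^2" by (simp add: power_mult_distrib)
  then have "\<nu> * norm r \<le> \<rho> * norm d"
    by (rule power2_le_imp_le) (use t in \<open>simp add: \<rho>_def\<close>)
  then show ?thesis unfolding r_def \<rho>_def .
qed

lemma coD: "cocoercive_op \<beta> B \<Longrightarrow> u \<in> B x \<Longrightarrow> v \<in> B y \<Longrightarrow> \<beta> * (norm (u - v))^2 \<le> inner (u - v) (x - y)"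
  unfolding cocoercive_op_def by blast

lemma coco_lip:
  assumes co: "cocoercive_op \<beta> B" and beta: "\<beta> > 0" and u: "u \<in> B x" and v: "v \<in> B y"
  shows "\<beta> * norm (u - v) \<le> norm (x - y)"
proof (cases "u = v")
  case True then show ?thesis by simp
next
  case False
  have "\<beta> * (norm (u - v))^2 \<le> inner (u - v) (x - y)" by (rule coD[OF co u v])
  also have "\<dots> \<le> norm (u - v) * norm (x - y)" by (rule norm_cauchy_schwarz)
  finally have "(\<beta> * norm (u - v)) * norm (u - v) \<le> norm (x - y) * norm (u - v)"
    by (simp add: power2_eq_square algebra_simps)
  then show ?thesis using False by (simp add: mult_le_cancel_right_pos)
qed

lemma solution_closed:
  assumes mA: "max_monotone_op A" and mB: "max_monotone_op B" and beta: "\<beta> > 0"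
    and co: "cocoercive_op \<beta> B"
  shows "closed (solution_set A B)"
proof -
  define Bf where "Bf x = (SOME v. v \<in> B x)" for x
  have Bf: "Bf x \<in> B x" for x unfolding Bf_def using cocoercive_dom[OF mB beta co] by (rule someI_ex)
  have uniq: "v = Bf x" if "v \<in> B x" for v x
    using coco_lip[OF co beta that Bf[of x]] beta by (auto simp: mult_le_0_iff)
  have lip: "(1/\<beta>)-lipschitz_on UNIV Bf"
  proof (rule lipschitz_onI)
    fix x y :: 'a
    have "\<beta> * norm (Bf x - Bf y) \<le> norm (x - y)" by (rule coco_lip[OF co beta Bf Bf])
    then show "dist (Bf x) (Bf y) \<le> 1 / \<beta> * dist x y" using beta
      by (simp add: dist_norm field_simps)
  qed (use beta in simp)
  have cBf: "continuous_on UNIV Bf" by (rule lipschitz_on_continuous_on[OF lip])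
  have mono: "monotone_op A" using mA unfolding max_monotone_op_def by blast
  have eq: "solution_set A B = (\<Inter>p\<in>{(y,u). u \<in> A y}. {x. 0 \<le> inner (- Bf x - snd p) (x - fst p)})"
  proof (intro set_eqI iffI)
    fix x assume "x \<in> solution_set A B"
    then obtain u v where uv: "u \<in> A x" "v \<in> B x" "u + v = 0" unfolding solution_set_def by blast
    have "u = - v" using uv(3) by (simp add: eq_neg_iff_add_eq_0)
    then have "- Bf x \<in> A x" using uniq[OF uv(2)] uv(1) by simp
    have "0 \<le> inner (- Bf x - snd p) (x - fst p)" if "p \<in> {(y,u). u \<in> A y}" for p
    proof -
      have "snd p \<in> A (fst p)" using that by auto
      then show ?thesis by (rule mono_opD[OF mono \<open>- Bf x \<in> A x\<close>])
    qed
    then show "x \<in> (\<Inter>p\<in>{(y,u). u \<in> A y}. {x. 0 \<le> inner (- Bf x - snd p) (x - fst p)})"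
      by blast
  next
    fix x assume "x \<in> (\<Inter>p\<in>{(y,u). u \<in> A y}. {x. 0 \<le> inner (- Bf x - snd p) (x - fst p)})"
    then have "- Bf x \<in> A x" by (intro max_opD[OF mA]) auto
    then show "x \<in> solution_set A B" unfolding solution_set_def using Bf[of x]
      by (intro CollectI bexI[of _ "- Bf x"] bexI[of _ "Bf x"]) auto
  qed
  have "closed {x. 0 \<le> inner (- Bf x - snd p) (x - fst p)}" for p
  proof -
    have "continuous_on UNIV (\<lambda>x. inner (- Bf x - snd p) (x - fst p))"
      by (intro continuous_on_inner continuous_on_diff continuous_on_minus cBf continuous_on_id continuous_on_const)
    then show ?thesis by (rule closed_Collect_le[OF continuous_on_const])
  qed
  then show ?thesis unfolding eq by (intro closed_INT) auto
qed

lemma fix_point: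
  assumes mA: "max_monotone_op A" and mB: "max_monotone_op B" and gam: "\<gamma> > 0"
    and us: "us \<in> A p" and bs: "bs \<in> B p" and sum0: "us + bs = 0"
  shows "DR_op lam \<gamma> A B (p + \<gamma> *\<^sub>R bs) = p + \<gamma> *\<^sub>R bs"
proof -
  have r1: "resolvent (scale_op \<gamma> B) (p + \<gamma> *\<^sub>R bs) = p"
    by (rule resolvent_eq[OF mB gam]) (use gam bs in simp)
  have "us = - bs" using sum0 by (simp add: eq_neg_iff_add_eq_0)
  then have r2: "resolvent (scale_op \<gamma> A) (p - \<gamma> *\<^sub>R bs) = p"
    by (intro resolvent_eq[OF mA gam]) (use gam us in simp)
  have rB: "reflected_resolvent (scale_op \<gamma> B) (p + \<gamma> *\<^sub>R bs) = p - \<gamma> *\<^sub>R bs"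
    unfolding reflected_resolvent_def r1 by (simp add: algebra_simps scaleR_2)
  have rA: "reflected_resolvent (scale_op \<gamma> A) (p - \<gamma> *\<^sub>R bs) = p + \<gamma> *\<^sub>R bs"
    unfolding reflected_resolvent_def r2 by (simp add: algebra_simps scaleR_2)
  show ?thesis unfolding DR_op_def rB rA by (simp add: algebra_simps)
qed

theorem proposition2:
  fixes A B :: "'a::euclidean_space \<Rightarrow> 'a set"
    and \<beta> \<mu>f lam \<gamma> :: real and w1 :: 'a
  assumes "max_monotone_op A" and "max_monotone_op B"
    and "\<beta> > 0" and "cocoercive_op \<beta> B"
    and "solution_set A B \<noteq> {}"
    and "\<mu>f > 0" and "restricted_strongly_monotone \<mu>f A B"
    and "0 < lam" and "lam < 2"
    and "0 < \<gamma>" and "\<gamma> \<le> \<beta>"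
    and "fixed_points (DR_op lam \<gamma> A B) \<noteq> {}"
  shows "error_bound_on (DR_op lam \<gamma> A B)
           {w. infdist w (fixed_points (DR_op lam \<gamma> A B))
                 \<le> infdist w1 (fixed_points (DR_op lam \<gamma> A B))}
           ((\<gamma> + \<gamma> * min (\<mu>f * \<beta>) 1 + \<beta>) / (lam * \<gamma> * min (\<mu>f * \<beta>) 1))"
proof -
  note mA = assms(1) and mB = assms(2) and beta = assms(3) and co = assms(4) and Xne = assms(5)
    and muf = assms(6) and rsm = assms(7) and lam = assms(8) and gam = assms(10) and gb = assms(11)
  define \<mu>' where "\<mu>' = min \<mu>f (1/\<beta>)"
  have mu'pos: "\<mu>' > 0" unfolding \<mu>'_def using muf beta by simp
  have mu'le: "\<mu>' \<le> \<mu>f" "\<mu>' \<le> 1/\<beta>" unfolding \<mu>'_def by auto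
  have meq: "min (\<mu>f * \<beta>) 1 = \<beta> * \<mu>'"
  proof (cases "\<mu>f \<le> 1/\<beta>")
    case True
    then have "\<mu>f * \<beta> \<le> 1" using beta by (simp add: field_simps)
    then show ?thesis using True unfolding \<mu>'_def by (simp add: mult.commute)
  next
    case False
    then have "\<mu>f * \<beta> > 1" using beta by (simp add: field_simps)
    then show ?thesis using False beta unfolding \<mu>'_def by simp
  qed
  define K where "K = (\<gamma> + \<gamma> * min (\<mu>f * \<beta>) 1 + \<beta>) / (lam * \<gamma> * min (\<mu>f * \<beta>) 1)"
  have Kpos: "K \<ge> 0" unfolding K_def meq using beta gam lam mu'pos by simp
  define t where "t = \<gamma> / \<beta>"
  define \<nu> where "\<nu> = \<gamma> * \<mu>'"
  have Klam: "K * lam = 1 + (1 + t) / \<nu>"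
    unfolding K_def meq t_def \<nu>_def using beta gam lam mu'pos by (simp add: field_simps)
  have main: "infdist w (fixed_points (DR_op lam \<gamma> A B)) \<le> K * norm (w - DR_op lam \<gamma> A B w)" for w
  proof -
    define z where "z = resolvent (scale_op \<gamma> B) w"
    define b where "b = (w - z) /\<^sub>R \<gamma>"
    have hb: "b \<in> B z" unfolding b_def z_def by (rule resolvent_mem[OF mB gam])
    define y where "y = reflected_resolvent (scale_op \<gamma> B) w"
    have y: "y = 2 *\<^sub>R z - w" unfolding y_def z_def reflected_resolvent_def ..
    define x where "x = resolvent (scale_op \<gamma> A) y"
    define a where "a = (y - x) /\<^sub>R \<gamma>"
    have ha: "a \<in> A x" unfolding a_def x_def by (rule resolvent_mem[OF mA gam])
    have Tw: "DR_op lam \<gamma> A B w = (1 - lam/2) *\<^sub>R w + (lam/2) *\<^sub>R (2 *\<^sub>R x - y)"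
      unfolding DR_op_def reflected_resolvent_def[of "scale_op \<gamma> A"] x_def y_def ..
    define d where "d = z - x"
    have wT: "w - DR_op lam \<gamma> A B w = lam *\<^sub>R d"
      unfolding Tw y d_def by (simp add: algebra_simps)
    obtain vx where vx: "vx \<in> B x" using cocoercive_dom[OF mB beta co] by blast
    define X where "X = solution_set A B"
    have Xc: "closed X" unfolding X_def by (rule solution_closed[OF mA mB beta co])
    define p where "p = closest_point X x"
    have pX: "p \<in> X" unfolding p_def using Xc Xne X_def by (simp add: closest_point_in_set)
    then obtain us bs where us: "us \<in> A p" and bs: "bs \<in> B p" and s0: "us + bs = 0"
      unfolding X_def solution_set_def by blast
    define wb where "wb = p + \<gamma> *\<^sub>R bs"
    have wbF: "wb \<in> fixed_points (DR_op lam \<gamma> A B)"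
      unfolding fixed_points_def wb_def using fix_point[OF mA mB gam us bs s0] by simp
    define e where "e = x - p"
    define G where "G = \<beta> *\<^sub>R (vx - bs)"
    define H where "H = \<beta> *\<^sub>R (b - vx)"
    have wz: "w = z + \<gamma> *\<^sub>R b" unfolding b_def using gam by simp
    have ga: "\<gamma> *\<^sub>R a = y - x" "\<gamma> *\<^sub>R b = w - z" unfolding a_def b_def using gam by auto
    have ab: "\<gamma> *\<^sub>R (a + b) = d" unfolding scaleR_add_right ga d_def y
      by (simp add: algebra_simps scaleR_2)
    have c2: "inner G e \<ge> (norm G)^2"
    proof -
      have "\<beta> * (norm (vx - bs))^2 \<le> inner (vx - bs) e" unfolding e_def by (rule coD[OF co vx bs])
      then have "\<beta> * (\<beta> * (norm (vx - bs))^2) \<le> \<beta> * inner (vx - bs) e" using beta by simp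
      moreover have "(norm G)^2 = \<beta> * (\<beta> * (norm (vx - bs))^2)" unfolding G_def using beta
        by (simp add: power2_eq_square)
      moreover have "inner G e = \<beta> * inner (vx - bs) e" unfolding G_def by simp
      ultimately show ?thesis by linarith
    qed
    have c3: "inner H d \<ge> (norm H)^2"
    proof -
      have "\<beta> * (norm (b - vx))^2 \<le> inner (b - vx) d" unfolding d_def by (rule coD[OF co hb vx])
      then have "\<beta> * (\<beta> * (norm (b - vx))^2) \<le> \<beta> * inner (b - vx) d" using beta by simp
      moreover have "(norm H)^2 = \<beta> * (\<beta> * (norm (b - vx))^2)" unfolding H_def using beta
        by (simp add: power2_eq_square)
      moreover have "inner H d = \<beta> * inner (b - vx) d" unfolding H_def by simp
      ultimately show ?thesis by linarith
    qed
    have c5: "\<nu> * (norm e)^2 \<le> inner d e - t * inner H e"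
    proof -
      have "\<mu>f * (norm e)^2 \<le> inner (a + vx) e"
        using rsm ha vx unfolding restricted_strongly_monotone_def e_def p_def X_def by blast
      then have "\<gamma> * (\<mu>f * (norm e)^2) \<le> \<gamma> * inner (a + vx) e" using gam by simp
      also have "\<gamma> * inner (a + vx) e = inner d e - \<gamma> * inner (b - vx) e"
      proof -
        have "\<gamma> * inner (a + vx) e = inner (\<gamma> *\<^sub>R (a + b)) e - \<gamma> * inner (b - vx) e"
          by (simp add: algebra_simps inner_add_left inner_diff_left)
        then show ?thesis unfolding ab .
      qed
      also have "\<gamma> * inner (b - vx) e = t * inner H e" unfolding t_def H_def using beta by simp
      finally have "\<gamma> * (\<mu>f * (norm e)^2) \<le> inner d e - t * inner H e" .
      moreover have "\<nu> * (norm e)^2 \<le> \<gamma> * (\<mu>f * (norm e)^2)"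
        unfolding \<nu>_def using mu'le gam by (simp add: mult_right_mono)
      ultimately show ?thesis by linarith
    qed
    have tpos: "0 < t" "t \<le> 1" unfolding t_def using gam beta gb by auto
    have nupos: "0 < \<nu>" "\<nu> \<le> t" unfolding \<nu>_def t_def using gam mu'pos mu'le(2) beta
      by (auto simp: field_simps)
    have core: "\<nu> * norm (e + t *\<^sub>R G + t *\<^sub>R H) \<le> (1+t) * norm d"
      by (rule core_ineq[OF tpos nupos c2 c3 c5])
    have r: "e + t *\<^sub>R G + t *\<^sub>R H = e + \<gamma> *\<^sub>R (b - bs)"
      unfolding t_def G_def H_def using beta by (simp add: algebra_simps)
    have "w - wb = d + (e + \<gamma> *\<^sub>R (b - bs))"
      unfolding wz wb_def d_def e_def by (simp add: algebra_simps)
    then have "w - wb = d + (e + t *\<^sub>R G + t *\<^sub>R H)" by (simp only: r)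
    then have "norm (w - wb) \<le> norm d + norm (e + t *\<^sub>R G + t *\<^sub>R H)"
      by (simp add: norm_triangle_ineq)
    also have "norm (e + t *\<^sub>R G + t *\<^sub>R H) \<le> (1 + t) / \<nu> * norm d"
      using core nupos by (simp add: field_simps)
    finally have "norm (w - wb) \<le> (1 + (1 + t) / \<nu>) * norm d" by (simp add: algebra_simps)
    also have "\<dots> = K * norm (w - DR_op lam \<gamma> A B w)"
      unfolding wT Klam[symmetric] using lam by simp
    finally have "norm (w - wb) \<le> K * norm (w - DR_op lam \<gamma> A B w)" .
    moreover have "infdist w (fixed_points (DR_op lam \<gamma> A B)) \<le> norm (w - wb)"
      using infdist_le[OF wbF, of w] by (simp add: dist_norm)
    ultimately show ?thesis by linarith
  qed
  show ?thesis unfolding error_bound_on_def K_def[symmetric] using Kpos main by blast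
qed

end
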